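(* Assume $\min\{m,n\}=2$. Let $d\in\{2,3\}$ and let $K\subset M^{m\times n}$ be a $d$-dimensional subspace without Rank-$1$ connections. Then there exists $\beta\in\mathbb{R}^{q_0}\setminus\{0\}$ with $\sum_{k=1}^{q_0}\beta_kM_k(X)\ge0$ for all $X\in K$ and $\sum_k\beta_kM_k\not\equiv0$ on $K$, where $M_1,\dots,M_{q_0}$ are all the $2\times2$ minors of $m\times n$ matrices.
   Context: A set has Rank-$1$ connections if it contains $A\ne B$ with $\mathrm{Rank}(A-B)=1$. *)

theory Defs
  imports "HOL-Analysis.Analysis"
begin

definition has_rank1_connections :: "(real^'n^'m) set \<Rightarrow> bool" where
  "has_rank1_connections K \<longleftrightarrow> (\<exists>A\<in>K. \<exists>B\<in>K. A \<noteq> B \<and> rank (A - B) = 1)"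

definition minor_indices :: "('m::{finite,linorder} \<times> 'm \<times> 'n::{finite,linorder} \<times> 'n) set" where
  "minor_indices = {(i, j, k, l). i < j \<and> k < l}"

definition minor2 :: "('m \<times> 'm \<times> 'n \<times> 'n) \<Rightarrow> real^'n^'m \<Rightarrow> real" where
  "minor2 p X = (case p of (i, j, k, l) \<Rightarrow> X$i$k * X$j$l - X$i$l * X$j$k)"

end

theory Submission imports Defs begin

lemma rank_one_lemma:
  fixes Y :: "real^'n::finite^'m::finite"
  assumes "Y \<noteq> 0" "\<forall>i. \<exists>t. Y $ i = t *\<^sub>R g"
  shows "rank Y = 1"
proof -
  have "rows Y \<subseteq> span {g}"
    using assms(2) by (auto simp: rows_def row_def span_breakdown_eq vec_nth_inverse intro: span_mul span_base)
  then have "dim (rows Y) \<le> dim (span {g})" by (rule dim_subset)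
  also have "\<dots> \<le> 1" using dim_span dim_le_card[of "{g}" "{g}"] by simp
  finally have "rank Y \<le> 1" by (simp add: row_rank_def)
  moreover have "rank Y \<noteq> 0" using assms(1) rank_eq_0 by blast
  ultimately show ?thesis by simp
qed

lemma minor2_scale: "minor2 p (c *\<^sub>R X) = c^2 * minor2 p X"
  by (cases p) (simp add: minor2_def power2_eq_square algebra_simps)

lemma minor2_transpose: "minor2 (k, l, i, j) (transpose X) = minor2 (i, j, k, l) X"
  by (simp add: minor2_def transpose_def algebra_simps)

lemma key_rows:
  fixes C :: "(real^'n::{finite,linorder}^'m::{finite,linorder}) set"
  assumes card: "CARD('m) = 2" and fin: "finite C" and wpos: "\<forall>X\<in>C. w X > 0"
    and nz: "\<exists>X\<in>C. X \<noteq> 0"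
    and mc: "\<forall>p\<in>minor_indices. (\<Sum>X\<in>C. w X * minor2 p X) = 0"
  shows "\<exists>Y\<in>span C. Y \<noteq> 0 \<and> rank Y = 1"
proof -
  obtain a b :: 'm where ab: "UNIV = {a, b}" "a \<noteq> b"
    using card unfolding card_2_iff by blast
  obtain r1 r2 :: 'm where r12: "r1 < r2" and univ: "UNIV = {r1, r2}"
  proof (cases "a < b")
    case True then show ?thesis using that[of a b] ab by simp
  next
    case False then have "b < a" using ab(2) by auto
    then show ?thesis using that[of b a] ab by (simp add: insert_commute)
  qed
  have allr: "P r1 \<Longrightarrow> P r2 \<Longrightarrow> P i" for P i
  proof -
    have "i \<in> {r1, r2}" using univ by (metis UNIV_I)
    then show "P r1 \<Longrightarrow> P r2 \<Longrightarrow> P i" by auto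
  qed
  define u :: "real^'n::{finite,linorder}^'m::{finite,linorder} \<Rightarrow> real^'n::{finite,linorder}" where "u X = X $ r1" for X
  define v :: "real^'n::{finite,linorder}^'m::{finite,linorder} \<Rightarrow> real^'n::{finite,linorder}" where "v X = X $ r2" for X
  define N where "N k l = (\<Sum>X\<in>C. w X * (u X $ k * v X $ l))" for k l
  have Nlt: "N k l = N l k" if "k < l" for k l
  proof -
    have "(r1, r2, k, l) \<in> minor_indices" using r12 that by (simp add: minor_indices_def)
    then have "(\<Sum>X\<in>C. w X * minor2 (r1, r2, k, l) X) = 0" using mc by blast
    then have "(\<Sum>X\<in>C. w X * (u X $ k * v X $ l) - w X * (u X $ l * v X $ k)) = 0"
      by (simp add: minor2_def u_def v_def algebra_simps)
    then show ?thesis by (simp add: N_def sum_subtractf)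
  qed
  have Nsym: "N k l = N l k" for k l
    using Nlt[of k l] Nlt[of l k] by (cases k l rule: linorder_cases) auto
  have Nexp: "(\<Sum>X\<in>C. w X * (u X \<bullet> z) * (v X \<bullet> y)) = (\<Sum>k\<in>UNIV. \<Sum>l\<in>UNIV. z $ k * y $ l * N k l)" for z y
  proof -
    have "(\<Sum>X\<in>C. w X * (u X \<bullet> z) * (v X \<bullet> y))
        = (\<Sum>X\<in>C. \<Sum>k\<in>UNIV. \<Sum>l\<in>UNIV. z $ k * y $ l * (w X * (u X $ k * v X $ l)))"
      by (simp add: inner_vec_def sum_product sum_distrib_left mult_ac)
    also have "\<dots> = (\<Sum>k\<in>UNIV. \<Sum>X\<in>C. \<Sum>l\<in>UNIV. z $ k * y $ l * (w X * (u X $ k * v X $ l)))"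
      by (rule sum.swap)
    also have "\<dots> = (\<Sum>k\<in>UNIV. \<Sum>l\<in>UNIV. \<Sum>X\<in>C. z $ k * y $ l * (w X * (u X $ k * v X $ l)))"
      by (rule sum.cong[OF refl], rule sum.swap)
    also have "\<dots> = (\<Sum>k\<in>UNIV. \<Sum>l\<in>UNIV. z $ k * y $ l * N k l)"
      by (simp add: N_def sum_distrib_left)
    finally show ?thesis .
  qed
  have symm: "(\<Sum>X\<in>C. w X * (u X \<bullet> z) * (v X \<bullet> y)) = (\<Sum>X\<in>C. w X * (u X \<bullet> y) * (v X \<bullet> z))" for z y
    unfolding Nexp by (subst sum.swap) (simp add: Nsym mult_ac)
  show ?thesis
  proof (cases "\<exists>X\<in>C. X \<noteq> 0 \<and> u X = 0")
    case True
    then obtain X where X: "X \<in> C" "X \<noteq> 0" "u X = 0" by blast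
    have "\<forall>i. \<exists>t. X $ i = t *\<^sub>R v X"
    proof
      fix i show "\<exists>t. X $ i = t *\<^sub>R v X"
      proof (rule allr[of "\<lambda>i. \<exists>t. X $ i = t *\<^sub>R v X"])
        show "\<exists>t. X $ r1 = t *\<^sub>R v X" using X(3) by (intro exI[of _ 0]) (simp add: u_def)
        show "\<exists>t. X $ r2 = t *\<^sub>R v X" by (intro exI[of _ 1]) (simp add: v_def)
      qed
    qed
    then have "rank X = 1" using X(2) by (intro rank_one_lemma) auto
    then show ?thesis using X span_base by blast
  next
    case False
    obtain X0 where X0: "X0 \<in> C" "X0 \<noteq> 0" using nz by blast
    then have uX0: "u X0 \<noteq> 0" using False by blast
    define U where "U = span (u ` C)"
    define QG where "QG z = (\<Sum>X\<in>C. w X * (u X \<bullet> z) * (u X \<bullet> z))" for z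
    define QN where "QN z = (\<Sum>X\<in>C. w X * (u X \<bullet> z) * (v X \<bullet> z))" for z
    have wsq: "0 \<le> w X * r * r" if "X \<in> C" for X r
      using wpos that by (simp add: mult.assoc less_imp_le)
    have QGnn: "QG z \<ge> 0" for z
      unfolding QG_def using wsq by (intro sum_nonneg) auto
    have QG0: "z = 0" if "QG z = 0" "z \<in> U" for z
    proof -
      have "\<forall>X\<in>C. w X * (u X \<bullet> z) * (u X \<bullet> z) = 0"
        using that(1) unfolding QG_def
        by (subst (asm) sum_nonneg_eq_0_iff[OF fin]) (use wsq in auto)
      then have "\<forall>X\<in>C. u X \<bullet> z = 0" using wpos by fastforce
      then have "orthogonal z z"
        using that(2) unfolding U_def
        by (intro orthogonal_to_span[of z "u ` C" z]) (auto simp: orthogonal_def inner_commute)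
      then show ?thesis by (simp add: orthogonal_def)
    qed
    have QGpos: "QG z > 0" if "z \<in> U" "z \<noteq> 0" for z
      using QG0[of z] QGnn[of z] that by linarith
    define S where "S = U \<inter> sphere 0 1"
    have cS: "compact S" unfolding S_def U_def by (intro closed_Int_compact closed_span compact_sphere)
    have "u X0 /\<^sub>R norm (u X0) \<in> S"
      using uX0 X0 unfolding S_def U_def by (auto intro: span_mul span_base)
    then have neS: "S \<noteq> {}" by blast
    have contS: "continuous_on S (\<lambda>z. QN z / QG z)"
    proof (rule continuous_on_divide)
      show "continuous_on S QN" unfolding QN_def by (intro continuous_intros)
      show "continuous_on S QG" unfolding QG_def by (intro continuous_intros)
      show "\<forall>x\<in>S. QG x \<noteq> 0" using QGpos unfolding S_def by fastforce
    qed
    obtain z0 where z0: "z0 \<in> S" "\<forall>z\<in>S. QN z / QG z \<le> QN z0 / QG z0"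
      using continuous_attains_sup[OF cS neS contS] by blast
    define \<mu> where "\<mu> = QN z0 / QG z0"
    have z0U: "z0 \<in> U" and z0nz: "z0 \<noteq> 0" using z0(1) unfolding S_def by auto
    have QGz0: "QG z0 > 0" using QGpos z0U z0nz by blast
    have QNz0: "QN z0 = \<mu> * QG z0" using QGz0 by (simp add: \<mu>_def)
    have homN: "QN (c *\<^sub>R z) = c^2 * QN z" for c z
      by (simp add: QN_def sum_distrib_left power2_eq_square mult_ac)
    have homG: "QG (c *\<^sub>R z) = c^2 * QG z" for c z
      by (simp add: QG_def sum_distrib_left power2_eq_square mult_ac)
    have le: "QN z \<le> \<mu> * QG z" if "z \<in> U" for z
    proof (cases "z = 0")
      case True then show ?thesis by (simp add: QN_def QG_def)
    next
      case False
      define c where "c = inverse (norm z)"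
      have c0: "c \<noteq> 0" using False by (simp add: c_def)
      have "c *\<^sub>R z \<in> S" using that False unfolding S_def U_def c_def by (auto intro: span_mul)
      then have "QN (c *\<^sub>R z) / QG (c *\<^sub>R z) \<le> \<mu>" using z0(2) \<mu>_def by blast
      then have "QN z / QG z \<le> \<mu>" using c0 by (simp add: homN homG)
      moreover have "QG z > 0" using QGpos that False by blast
      ultimately show ?thesis by (simp add: divide_le_eq mult.commute)
    qed
    define B1 where "B1 y = (\<Sum>X\<in>C. w X * (u X \<bullet> z0) * (v X \<bullet> y))" for y
    define BG where "BG y = (\<Sum>X\<in>C. w X * (u X \<bullet> z0) * (u X \<bullet> y))" for y
    have FOC: "B1 y = \<mu> * BG y" if yU: "y \<in> U" for y
    proof -
      have B2: "(\<Sum>X\<in>C. w X * (u X \<bullet> y) * (v X \<bullet> z0)) = B1 y"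
        unfolding B1_def by (rule symm[symmetric])
      have expN: "QN (z0 + t *\<^sub>R y) = QN z0 + t * (2 * B1 y) + t^2 * QN y" for t
      proof -
        have "QN (z0 + t *\<^sub>R y) = (\<Sum>X\<in>C. w X * (u X \<bullet> z0) * (v X \<bullet> z0)
               + t * (w X * (u X \<bullet> z0) * (v X \<bullet> y) + w X * (u X \<bullet> y) * (v X \<bullet> z0))
               + t^2 * (w X * (u X \<bullet> y) * (v X \<bullet> y)))"
          unfolding QN_def by (rule sum.cong) (auto simp: inner_add_right algebra_simps power2_eq_square)
        also have "\<dots> = QN z0 + t * ((\<Sum>X\<in>C. w X * (u X \<bullet> z0) * (v X \<bullet> y))
              + (\<Sum>X\<in>C. w X * (u X \<bullet> y) * (v X \<bullet> z0))) + t^2 * QN y"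
          unfolding QN_def by (simp add: sum.distrib sum_distrib_left[symmetric])
        finally show ?thesis unfolding B2 B1_def by simp
      qed
      have expG: "QG (z0 + t *\<^sub>R y) = QG z0 + t * (2 * BG y) + t^2 * QG y" for t
      proof -
        have "QG (z0 + t *\<^sub>R y) = (\<Sum>X\<in>C. w X * (u X \<bullet> z0) * (u X \<bullet> z0)
               + t * (w X * (u X \<bullet> z0) * (u X \<bullet> y) + w X * (u X \<bullet> z0) * (u X \<bullet> y))
               + t^2 * (w X * (u X \<bullet> y) * (u X \<bullet> y)))"
          unfolding QG_def by (rule sum.cong) (auto simp: inner_add_right algebra_simps power2_eq_square)
        also have "\<dots> = QG z0 + t * ((\<Sum>X\<in>C. w X * (u X \<bullet> z0) * (u X \<bullet> y))
              + (\<Sum>X\<in>C. w X * (u X \<bullet> z0) * (u X \<bullet> y))) + t^2 * QG y"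
          unfolding QG_def by (simp add: sum.distrib sum_distrib_left[symmetric]) (auto simp: mult_ac intro!: sum.cong)
        finally show ?thesis unfolding BG_def by simp
      qed
      define b where "b = 2 * B1 y - 2 * \<mu> * BG y"
      define a where "a = QN y - \<mu> * QG y"
      have phi: "t * b + t^2 * a \<le> 0" for t
      proof -
        have "z0 + t *\<^sub>R y \<in> U" using z0U yU unfolding U_def by (intro span_add span_mul)
        then have "QN (z0 + t *\<^sub>R y) \<le> \<mu> * QG (z0 + t *\<^sub>R y)" by (rule le)
        then show ?thesis unfolding expN expG QNz0 a_def b_def by (simp add: algebra_simps)
      qed
      have "b = 0"
      proof (rule ccontr)
        assume "b \<noteq> 0"
        define c where "c = \<bar>a\<bar> + 1"
        define t where "t = b / c"
        have pos: "c > 0" "c + a > 0" unfolding c_def by (auto simp: abs_if)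
        have "t * b + t^2 * a = b^2 * (c + a) / c^2"
          unfolding t_def using pos by (simp add: field_simps power2_eq_square)
        moreover have "b^2 * (c + a) / c^2 > 0"
          using \<open>b \<noteq> 0\<close> pos by (intro divide_pos_pos mult_pos_pos) auto
        ultimately show False using phi[of t] by simp
      qed
      then show ?thesis by (simp add: b_def)
    qed
    define g where "g = (\<Sum>X\<in>C. (w X * (u X \<bullet> z0)) *\<^sub>R u X)"
    define h where "h = (\<Sum>X\<in>C. (w X * (u X \<bullet> z0)) *\<^sub>R v X)"
    have yg: "y \<bullet> g = BG y" for y
      by (simp add: g_def BG_def inner_sum_right mult_ac inner_commute)
    have yh: "y \<bullet> h = B1 y" for y
      by (simp add: h_def B1_def inner_sum_right mult_ac inner_commute)
    define d where "d = h - \<mu> *\<^sub>R g"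
    have dU: "y \<bullet> d = 0" if "y \<in> U" for y
      using FOC[OF that] by (simp add: d_def inner_diff_right yg yh)
    have dperp: "y \<bullet> d = 0" if yp: "\<And>x. x \<in> U \<Longrightarrow> orthogonal y x" for y
    proof -
      have uy: "u X \<bullet> y = 0" if "X \<in> C" for X
        using yp[of "u X"] that unfolding U_def by (auto intro: span_base simp: orthogonal_def inner_commute)
      have "B1 y = 0" unfolding B1_def symm using uy by simp
      moreover have "BG y = 0" unfolding BG_def using uy by simp
      ultimately show ?thesis by (simp add: d_def inner_diff_right yg yh)
    qed
    obtain y1 y2 where y12: "y1 \<in> span (u ` C)" "\<And>x. x \<in> span (u ` C) \<Longrightarrow> orthogonal y2 x" "d = y1 + y2"
      by (rule orthogonal_subspace_decomp_exists[of "u ` C" d]) blast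
    have "d \<bullet> d = 0"
      using dU[of y1] dperp[of y2] y12 unfolding U_def by (simp add: inner_add_left)
    then have hg: "h = \<mu> *\<^sub>R g" by (simp add: d_def)
    have "z0 \<bullet> g = QG z0" by (simp add: yg BG_def QG_def)
    then have gnz: "g \<noteq> 0" using QGz0 by auto
    define Y where "Y = (\<Sum>X\<in>C. (w X * (u X \<bullet> z0)) *\<^sub>R X)"
    have YC: "Y \<in> span C" unfolding Y_def by (intro span_sum span_mul span_base)
    have Y1: "Y $ r1 = g" by (simp add: Y_def g_def u_def sum_component)
    have Y2: "Y $ r2 = h" by (simp add: Y_def h_def v_def sum_component)
    have Ynz: "Y \<noteq> 0" using Y1 gnz by auto
    have "\<forall>i. \<exists>t. Y $ i = t *\<^sub>R g"
    proof
      fix i show "\<exists>t. Y $ i = t *\<^sub>R g"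
      proof (rule allr[of "\<lambda>i. \<exists>t. Y $ i = t *\<^sub>R g"])
        show "\<exists>t. Y $ r1 = t *\<^sub>R g" using Y1 by (intro exI[of _ 1]) simp
        show "\<exists>t. Y $ r2 = t *\<^sub>R g" using Y2 hg by blast
      qed
    qed
    then have "rank Y = 1" using Ynz by (intro rank_one_lemma) auto
    then show ?thesis using YC Ynz by blast
  qed
qed


lemma linear_transpose: "linear (transpose :: real^'n::finite^'m::finite \<Rightarrow> real^'m^'n)"
  by (rule linearI) (simp_all add: transpose_def vec_eq_iff)

lemma transpose_eq_0_iff: "transpose (X :: real^'n::finite^'m::finite) = 0 \<longleftrightarrow> X = 0"
  by (auto simp: transpose_def vec_eq_iff)

lemma key_cols:
  fixes C :: "(real^'n::{finite,linorder}^'m::{finite,linorder}) set"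
  assumes card: "CARD('n) = 2" and fin: "finite C" and wpos: "\<forall>X\<in>C. w X > 0"
    and nz: "\<exists>X\<in>C. X \<noteq> 0"
    and mc: "\<forall>p\<in>minor_indices. (\<Sum>X\<in>C. w X * minor2 p X) = 0"
  shows "\<exists>Y\<in>span C. Y \<noteq> 0 \<and> rank Y = 1"
proof -
  have inj: "inj_on transpose C" by (rule inj_onI) (simp add: transpose_iff)
  have "\<exists>Y\<in>span (transpose ` C). Y \<noteq> 0 \<and> rank Y = 1"
  proof (rule key_rows[where w="\<lambda>Z. w (transpose Z)"])
    show "CARD('n) = 2" by (rule card)
    show "finite (transpose ` C)" using fin by simp
    show "\<forall>X\<in>transpose ` C. 0 < w (transpose X)" using wpos by (simp add: transpose_transpose)
    show "\<exists>X\<in>transpose ` C. X \<noteq> 0" using nz by (auto simp: transpose_eq_0_iff)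
    show "\<forall>p\<in>minor_indices. (\<Sum>X\<in>transpose ` C. w (transpose X) * minor2 p X) = 0"
    proof
      fix p :: "'n \<times> 'n \<times> 'm \<times> 'm" assume p: "p \<in> minor_indices"
      obtain i j k l where pe: "p = (i, j, k, l)" by (cases p) auto
      have "(k, l, i, j) \<in> minor_indices" using p pe by (simp add: minor_indices_def)
      then have "(\<Sum>X\<in>C. w X * minor2 (k, l, i, j) X) = 0" using mc by blast
      moreover have "(\<Sum>X\<in>transpose ` C. w (transpose X) * minor2 p X) = (\<Sum>X\<in>C. w X * minor2 (k, l, i, j) X)"
        by (simp add: sum.reindex[OF inj] pe minor2_transpose transpose_transpose)
      ultimately show "(\<Sum>X\<in>transpose ` C. w (transpose X) * minor2 p X) = 0" by simp
    qed
  qed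
  then obtain Y where Y: "Y \<in> span (transpose ` C)" "Y \<noteq> 0" "rank Y = 1" by blast
  have "transpose Y \<in> transpose ` span (transpose ` C)" using Y(1) by blast
  also have "\<dots> = span (transpose ` transpose ` C)"
    by (rule span_linear_image[symmetric], rule linear_transpose)
  also have "transpose ` transpose ` C = C" by (simp add: image_image transpose_transpose)
  finally have "transpose Y \<in> span C" .
  moreover have "transpose Y \<noteq> 0" using Y(2) by (simp add: transpose_eq_0_iff)
  moreover have "rank (transpose Y) = 1" using Y(3) by (simp add: rank_transpose)
  ultimately show ?thesis by blast
qed


theorem lemma5:
  fixes K :: "(real^'n::{finite,linorder}^'m::{finite,linorder}) set"
    and d :: nat
  assumes "min CARD('m) CARD('n) = 2"
    and "d \<in> {2, 3}"
    and "subspace K"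
    and "dim K = d"
    and "\<not> has_rank1_connections K"
  shows "\<exists>\<beta> :: ('m \<times> 'm \<times> 'n \<times> 'n) \<Rightarrow> real.
           (\<exists>p\<in>minor_indices. \<beta> p \<noteq> 0)
         \<and> (\<forall>X\<in>K. (\<Sum>p\<in>minor_indices. \<beta> p * minor2 p X) \<ge> 0)
         \<and> (\<exists>X\<in>K. (\<Sum>p\<in>minor_indices. \<beta> p * minor2 p X) \<noteq> 0)"
proof -
  note sK = assms(3)
  define mv :: "real^'n::{finite,linorder}^'m::{finite,linorder} \<Rightarrow> real^('m \<times> 'm \<times> 'n \<times> 'n)"
    where "mv X = (\<chi> p. if p \<in> minor_indices then minor2 p X else 0)" for X
  have inner_mv: "a \<bullet> mv X = (\<Sum>p\<in>minor_indices. a $ p * minor2 p X)" for a X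
  proof -
    have "a \<bullet> mv X = (\<Sum>p\<in>UNIV. if p \<in> minor_indices then a $ p * minor2 p X else 0)"
      unfolding mv_def inner_vec_def by (intro sum.cong) auto
    also have "\<dots> = (\<Sum>p\<in>minor_indices. a $ p * minor2 p X)"
      by (simp add: sum.inter_restrict[symmetric])
    finally show ?thesis .
  qed
  have mv_comp: "p \<in> minor_indices \<Longrightarrow> mv X $ p = minor2 p X" for p X by (simp add: mv_def)
  have mv_scale: "mv (c *\<^sub>R X) = c^2 *\<^sub>R mv X" for c X
    by (simp add: mv_def vec_eq_iff minor2_scale)
  have minor0: "minor2 p 0 = 0" for p :: "'m \<times> 'm \<times> 'n \<times> 'n" by (cases p) (simp add: minor2_def)
  have c1: "continuous_on S (\<lambda>X::real^'n::{finite,linorder}^'m::{finite,linorder}. X $ i $ k)" for S i k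
    by (rule linear_continuous_on, rule bounded_linear_compose[OF bounded_linear_vec_nth bounded_linear_vec_nth])
  have contmv: "continuous_on S mv" for S
    unfolding mv_def
  proof (rule continuous_on_vec_lambda)
    fix p :: "'m \<times> 'm \<times> 'n \<times> 'n"
    show "continuous_on S (\<lambda>X. if p \<in> minor_indices then minor2 p X else 0)"
    proof (cases "p \<in> minor_indices")
      case True
      obtain i j k l where "p = (i, j, k, l)" by (cases p) auto
      then show ?thesis using True by (simp add: minor2_def) (intro continuous_intros c1)
    qed simp
  qed
  define A where "A = K \<inter> sphere 0 1"
  have cA: "compact A" unfolding A_def
    by (intro closed_Int_compact closed_subspace sK compact_sphere)
  define T where "T = convex hull (mv ` A)"
  have cT: "compact T" unfolding T_def
    by (intro compact_convex_hull compact_continuous_image contmv cA)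
  have AK: "A \<subseteq> K" unfolding A_def by blast
  have Anz: "X \<in> A \<Longrightarrow> X \<noteq> 0" for X unfolding A_def by auto
  have Kne: "\<exists>X\<in>K. X \<noteq> 0"
  proof (rule ccontr)
    assume "\<not> ?thesis"
    then have "K \<subseteq> {0}" by blast
    then have "dim K = 0" using dim_eq_0 by blast
    then show False using assms(2,4) by auto
  qed
  have normA: "X \<in> K \<Longrightarrow> X \<noteq> 0 \<Longrightarrow> inverse (norm X) *\<^sub>R X \<in> A" for X
    unfolding A_def using sK by (auto intro: subspace_scale)
  show ?thesis
  proof (cases "0 \<in> T")
    case False
    obtain a b where ab: "a \<noteq> 0" "0 < b" "\<forall>x\<in>T. a \<bullet> x > b"
      using separating_hyperplane_closed_0[OF _ compact_imp_closed[OF cT] False]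
      unfolding T_def by (auto intro: convex_convex_hull)
    have posA: "a \<bullet> mv X > 0" if "X \<in> A" for X
    proof -
      have "mv X \<in> T" unfolding T_def using that by (auto intro: hull_inc)
      then show ?thesis using ab by force
    qed
    have posK: "a \<bullet> mv X > 0" if "X \<in> K" "X \<noteq> 0" for X
    proof -
      have "a \<bullet> mv (inverse (norm X) *\<^sub>R X) > 0" using posA normA that by blast
      then have "(inverse (norm X))^2 * (a \<bullet> mv X) > 0" by (simp add: mv_scale)
      then show ?thesis by (simp add: zero_less_mult_iff)
    qed
    obtain X0 where X0: "X0 \<in> K" "X0 \<noteq> 0" using Kne by blast
    have s0: "(\<Sum>p\<in>minor_indices. a $ p * minor2 p X0) > 0" using posK[OF X0] inner_mv by simp
    show ?thesis
    proof (intro exI[of _ "\<lambda>p. a $ p"] conjI)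
      show "\<exists>p\<in>minor_indices. a $ p \<noteq> 0"
      proof (rule ccontr)
        assume "\<not> ?thesis"
        then have "(\<Sum>p\<in>minor_indices. a $ p * minor2 p X0) = 0" by simp
        then show False using s0 by simp
      qed
      show "\<forall>X\<in>K. 0 \<le> (\<Sum>p\<in>minor_indices. a $ p * minor2 p X)"
      proof
        fix X assume "X \<in> K"
        show "0 \<le> (\<Sum>p\<in>minor_indices. a $ p * minor2 p X)"
        proof (cases "X = 0")
          case True then show ?thesis by (simp add: minor0)
        next
          case False then show ?thesis using posK[OF \<open>X \<in> K\<close>] inner_mv by (simp add: less_imp_le)
        qed
      qed
      show "\<exists>X\<in>K. (\<Sum>p\<in>minor_indices. a $ p * minor2 p X) \<noteq> 0" using s0 X0 by force
    qed
  next
    case True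
    then obtain S u where Su: "finite S" "S \<subseteq> mv ` A" "\<forall>x\<in>S. 0 \<le> u x" "sum u S = 1"
        "(\<Sum>v\<in>S. u v *\<^sub>R v) = 0"
      unfolding T_def convex_hull_explicit by blast
    obtain C where C: "C \<subseteq> A" "inj_on mv C" "S = mv ` C"
      using Su(2) subset_image_inj by metis
    have finC: "finite C" using Su(1) C finite_imageD by blast
    define w where "w X = u (mv X)" for X
    define C' where "C' = {X \<in> C. w X > 0}"
    have wnn: "X \<in> C \<Longrightarrow> 0 \<le> w X" for X using Su(3) C(3) by (auto simp: w_def)
    have sumw: "(\<Sum>X\<in>C. w X) = 1" using Su(4) C by (simp add: sum.reindex w_def)
    have sumv: "(\<Sum>X\<in>C. w X *\<^sub>R mv X) = 0" using Su(5) C by (simp add: sum.reindex w_def)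
    have "(\<Sum>X\<in>C'. w X *\<^sub>R mv X) = (\<Sum>X\<in>C. w X *\<^sub>R mv X)"
      by (rule sum.mono_neutral_left) (use finC wnn in \<open>auto simp: C'_def less_le\<close>)
    then have sumv': "(\<Sum>X\<in>C'. w X *\<^sub>R mv X) = 0" using sumv by simp
    have "\<exists>X\<in>C. w X \<noteq> 0"
    proof (rule ccontr)
      assume "\<not> ?thesis" then have "(\<Sum>X\<in>C. w X) = 0" by simp
      then show False using sumw by simp
    qed
    then obtain X1 where X1: "X1 \<in> C'" using wnn unfolding C'_def by force
    have finC': "finite C'" using finC unfolding C'_def by simp
    have wpos: "\<forall>X\<in>C'. w X > 0" unfolding C'_def by simp
    have nz: "\<exists>X\<in>C'. X \<noteq> 0" using X1 Anz C(1) unfolding C'_def by blast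
    have mc: "\<forall>p\<in>minor_indices. (\<Sum>X\<in>C'. w X * minor2 p X) = 0"
    proof
      fix p :: "'m \<times> 'm \<times> 'n \<times> 'n" assume p: "p \<in> minor_indices"
      have "(\<Sum>X\<in>C'. w X *\<^sub>R mv X) $ p = 0" using sumv' by simp
      then show "(\<Sum>X\<in>C'. w X * minor2 p X) = 0" using p by (simp add: sum_component mv_comp)
    qed
    have "\<exists>Y\<in>span C'. Y \<noteq> 0 \<and> rank Y = 1"
    proof (cases "CARD('m) = 2")
      case True then show ?thesis using key_rows[OF True finC' wpos nz mc] by blast
    next
      case False
      then have "CARD('n) = 2" using assms(1) by (simp add: min_def split: if_splits)
      then show ?thesis using key_cols[OF _ finC' wpos nz mc] by blast
    qed
    then obtain Y where Y: "Y \<in> span C'" "Y \<noteq> 0" "rank Y = 1" by blast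
    have "span C' \<subseteq> K" using C(1) AK sK unfolding C'_def by (intro span_minimal) auto
    then have "Y \<in> K" using Y(1) by blast
    then have "has_rank1_connections K"
      unfolding has_rank1_connections_def using Y subspace_0[OF sK] by (intro bexI[of _ Y] bexI[of _ 0]) auto
    then show ?thesis using assms(5) by blast
  qed
qed

end
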